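(* The family $\mathcal C_n=\{C(w): w\in\mathcal W_n\}$ is a partition of $\mathcal W_n$.
   Context: Let $\mathcal A=\{a_1<a_2<\dots\}$ be a finite or countably infinite totally ordered alphabet. A word is primitive if it is not of the form $u^r$ with $r\ge 2$. $\mathcal W_n$ is the set of primitive words of length $n$ whose first letter is the smallest letter $a_w$ occurring in $w$ and whose last letter is different from $a_w$. Each $w\in\mathcal W_n$ decomposes uniquely as $w=B_1(w)\cdots B_{N}(w)$ into blocks, $N=N_n(w)$: each block begins with a run of $a_w$ and ends just before the next run of $a_w$. For a permutation $\sigma$ of $\{1,\dots,N\}$ set $\sigma.w=B_{\sigma(1)}(w)\cdots B_{\sigma(N)}(w)$, and $C(w)=\{\sigma.w:\sigma\in\mathfrak S_N,\ \sigma.w\in\mathcal W_n\}$. *)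

theory Defs
  imports "HOL-Library.Countable_Set" "HOL-Library.Disjoint_Sets" "HOL-Combinatorics.Permutations"
begin

definition primitive :: "'a list \<Rightarrow> bool" where
  "primitive w \<longleftrightarrow> \<not> (\<exists>u r. r \<ge> 2 \<and> w = concat (replicate r u))"

definition minlet :: "'a::linorder list \<Rightarrow> 'a" where
  "minlet w = Min (set w)"

definition Wn :: "'a::linorder set \<Rightarrow> nat \<Rightarrow> 'a list set" where
  "Wn A n = {w. set w \<subseteq> A \<and> length w = n \<and> primitive w \<and> w \<noteq> []
              \<and> hd w = minlet w \<and> last w \<noteq> minlet w}"

definition blocks :: "'a::linorder list \<Rightarrow> 'a list list" where
  "blocks w = (THE bs. concat bs = w \<and>
      (\<forall>b\<in>set bs. \<exists>k v. k \<ge> 1 \<and> v \<noteq> [] \<and> minlet w \<notin> set v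
                        \<and> b = replicate k (minlet w) @ v))"

definition nblocks :: "'a::linorder list \<Rightarrow> nat" where
  "nblocks w = length (blocks w)"

definition perm_act :: "(nat \<Rightarrow> nat) \<Rightarrow> 'a::linorder list \<Rightarrow> 'a list" where
  "perm_act \<sigma> w = concat (map (\<lambda>i. blocks w ! \<sigma> i) [0..<nblocks w])"

definition Cw :: "'a::linorder set \<Rightarrow> nat \<Rightarrow> 'a list \<Rightarrow> 'a list set" where
  "Cw A n w = {perm_act \<sigma> w | \<sigma>. \<sigma> permutes {..<nblocks w} \<and> perm_act \<sigma> w \<in> Wn A n}"

end

theory Submission
  imports Defs
begin

definition blk :: "'a \<Rightarrow> 'a list \<Rightarrow> bool" where
  "blk a b \<longleftrightarrow> (\<exists>k v. k \<ge> 1 \<and> v \<noteq> [] \<and> a \<notin> set v \<and> b = replicate k a @ v)"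

lemma starts_a: "\<forall>b\<in>set bs. blk a b \<Longrightarrow> concat bs = [] \<or> hd (concat bs) = a"
  by (cases bs) (auto simp: blk_def)

lemma blk_split:
  assumes "blk a b" "r = [] \<or> hd r = a"
  obtains k v where "k \<ge> 1" "v \<noteq> []" "a \<notin> set v" "b = replicate k a @ v"
    "takeWhile (\<lambda>x. x = a) (b @ r) = replicate k a"
    "dropWhile (\<lambda>x. x = a) (b @ r) = v @ r"
    "takeWhile (\<lambda>x. x \<noteq> a) (v @ r) = v"
    "dropWhile (\<lambda>x. x \<noteq> a) (v @ r) = r"
proof -
  from assms(1) obtain k v where kv: "k \<ge> 1" "v \<noteq> []" "a \<notin> set v" "b = replicate k a @ v"
    unfolding blk_def by blast
  from kv(2,3) obtain x v' where "v = x # v'" "x \<noteq> a" by (cases v) auto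
  then have 1: "takeWhile (\<lambda>x. x = a) (b @ r) = replicate k a"
    "dropWhile (\<lambda>x. x = a) (b @ r) = v @ r"
    using kv by (simp_all add: takeWhile_append dropWhile_append)
  have 2: "takeWhile (\<lambda>x. x \<noteq> a) (v @ r) = v" "dropWhile (\<lambda>x. x \<noteq> a) (v @ r) = r"
    using kv(3) assms(2) by (cases r; auto simp: takeWhile_append dropWhile_append)+
  show ?thesis using that kv 1 2 by blast
qed

lemma blk_unique:
  "\<forall>b\<in>set bs. blk a b \<Longrightarrow> \<forall>c\<in>set cs. blk a c \<Longrightarrow> concat bs = concat cs \<Longrightarrow> bs = cs"
proof (induction bs arbitrary: cs)
  case Nil
  then show ?case by (cases cs) (auto simp: blk_def)
next
  case (Cons b bs)
  show ?case
  proof (cases cs)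
    case Nil
    then show ?thesis using Cons.prems by (auto simp: blk_def)
  next
    case (Cons c cs')
    have bb: "blk a b" "\<forall>b\<in>set bs. blk a b" using Cons.prems by auto
    have cc: "blk a c" "\<forall>b\<in>set cs'. blk a b" using Cons.prems Cons by auto
    have eq: "b @ concat bs = c @ concat cs'" using Cons.prems Cons by simp
    obtain k v where k: "b = replicate k a @ v"
      "takeWhile (\<lambda>x. x = a) (b @ concat bs) = replicate k a"
      "dropWhile (\<lambda>x. x = a) (b @ concat bs) = v @ concat bs"
      "takeWhile (\<lambda>x. x \<noteq> a) (v @ concat bs) = v"
      "dropWhile (\<lambda>x. x \<noteq> a) (v @ concat bs) = concat bs"
      using blk_split[OF bb(1) starts_a[OF bb(2)]] by metis
    obtain l u where l: "c = replicate l a @ u"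
      "takeWhile (\<lambda>x. x = a) (c @ concat cs') = replicate l a"
      "dropWhile (\<lambda>x. x = a) (c @ concat cs') = u @ concat cs'"
      "takeWhile (\<lambda>x. x \<noteq> a) (u @ concat cs') = u"
      "dropWhile (\<lambda>x. x \<noteq> a) (u @ concat cs') = concat cs'"
      using blk_split[OF cc(1) starts_a[OF cc(2)]] by metis
    have "replicate k a = replicate l a" using k(2) l(2) eq by simp
    moreover have e2: "v @ concat bs = u @ concat cs'" using k(3) l(3) eq by simp
    moreover have "v = u" using k(4) l(4) e2 by simp
    ultimately have "b = c" "concat bs = concat cs'" using k(1) l(1) k(5) l(5) by auto
    then show ?thesis using Cons.IH[OF bb(2) cc(2)] Cons by simp
  qed
qed

lemma blk_exists:
  "w = [] \<or> (hd w = a \<and> last w \<noteq> a) \<Longrightarrow> \<exists>bs. concat bs = w \<and> (\<forall>b\<in>set bs. blk a b)"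
proof (induction "length w" arbitrary: w rule: less_induct)
  case less
  show ?case
  proof (cases "w = []")
    case True then show ?thesis by (intro exI[of _ "[]"]) simp
  next
    case False
    then have hw: "hd w = a" "last w \<noteq> a" using less.prems by auto
    define p where "p = takeWhile (\<lambda>x. x = a) w"
    define rest where "rest = dropWhile (\<lambda>x. x = a) w"
    have wp: "w = p @ rest" unfolding p_def rest_def by simp
    have pne: "p \<noteq> []" using False hw unfolding p_def by (cases w) auto
    have prep: "p = replicate (length p) a"
      by (rule replicate_length_same[symmetric]) (auto simp: p_def dest: set_takeWhileD)
    have restne: "rest \<noteq> []"
    proof
      assume "rest = []"
      then have "w = p" using wp by simp
      then have "last w = a" using pne prep last_in_set[OF pne] by (metis in_set_replicate)
      then show False using hw by simp
    qed
    have hrest: "hd rest \<noteq> a"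
      using hd_dropWhile[of "\<lambda>x. x = a" w] restne unfolding rest_def by simp
    define v where "v = takeWhile (\<lambda>x. x \<noteq> a) rest"
    define r where "r = dropWhile (\<lambda>x. x \<noteq> a) rest"
    have rv: "rest = v @ r" unfolding v_def r_def by simp
    have vne: "v \<noteq> []" using restne hrest unfolding v_def by (cases rest) auto
    have av: "a \<notin> set v" unfolding v_def by (auto dest: set_takeWhileD)
    have rcond: "r = [] \<or> (hd r = a \<and> last r \<noteq> a)"
    proof (cases "r = []")
      case False
      have "hd r = a" using False hd_dropWhile[of "\<lambda>x. x \<noteq> a" rest] unfolding r_def by simp
      moreover have "last r = last w" using False wp rv by simp
      ultimately show ?thesis using hw by simp
    qed simp
    have lr: "length r < length w" using wp rv pne vne by simp
    from less.hyps[OF lr rcond] obtain bs where bs: "concat bs = r" "\<forall>b\<in>set bs. blk a b" by blast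
    have lp: "1 \<le> length p" using pne by (cases p) auto
    have "blk a (p @ v)" unfolding blk_def using lp vne av prep
      by (intro exI[of _ "length p"] exI[of _ v]) simp
    then show ?thesis using bs wp rv by (intro exI[of _ "(p @ v) # bs"]) auto
  qed
qed

lemma blocks_char:
  assumes "w \<noteq> []" "hd w = minlet w" "last w \<noteq> minlet w"
  shows "concat (blocks w) = w \<and> (\<forall>b\<in>set (blocks w). blk (minlet w) b)"
proof -
  have ex: "\<exists>!bs. concat bs = w \<and> (\<forall>b\<in>set bs. blk (minlet w) b)"
  proof -
    obtain bs where bs: "concat bs = w" "\<forall>b\<in>set bs. blk (minlet w) b"
      using blk_exists[of w "minlet w"] assms by blast
    show ?thesis
    proof (rule ex1I[of _ bs])
      show "concat bs = w \<and> (\<forall>b\<in>set bs. blk (minlet w) b)" using bs by simp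
    next
      fix cs assume "concat cs = w \<and> (\<forall>b\<in>set cs. blk (minlet w) b)"
      then show "cs = bs" using blk_unique[of cs "minlet w" bs] bs by simp
    qed
  qed
  have "blocks w = (THE bs. concat bs = w \<and> (\<forall>b\<in>set bs. blk (minlet w) b))"
    unfolding blocks_def blk_def by simp
  then show ?thesis using theI'[OF ex] by simp
qed

lemma blocks_eq:
  assumes "w \<noteq> []" "hd w = minlet w" "last w \<noteq> minlet w"
    "concat bs = w" "\<forall>b\<in>set bs. blk (minlet w) b"
  shows "blocks w = bs"
proof -
  have "concat (blocks w) = w" "\<forall>b\<in>set (blocks w). blk (minlet w) b"
    using blocks_char[OF assms(1-3)] by auto
  then show ?thesis using blk_unique[of "blocks w" "minlet w" bs] assms(4,5) by simp
qed

lemma Wn_props: "w \<in> Wn A n \<Longrightarrow> w \<noteq> [] \<and> hd w = minlet w \<and> last w \<noteq> minlet w"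
  unfolding Wn_def by auto

lemma perm_act_eq: "perm_act \<sigma> w = concat (permute_list \<sigma> (blocks w))"
  unfolding perm_act_def permute_list_def nblocks_def by simp

lemma Cw_char:
  assumes "w \<in> Wn A n"
  shows "Cw A n w = {v \<in> Wn A n. mset (blocks v) = mset (blocks w)}"
proof (intro set_eqI iffI)
  fix v assume "v \<in> Cw A n w"
  then obtain \<sigma> where s: "\<sigma> permutes {..<length (blocks w)}" "v = perm_act \<sigma> w" "v \<in> Wn A n"
    unfolding Cw_def nblocks_def by blast
  let ?bs = "permute_list \<sigma> (blocks w)"
  have ms: "mset ?bs = mset (blocks w)" using s(1) by simp
  have sbs: "set ?bs = set (blocks w)" using mset_eq_setD[OF ms] .
  have vc: "v = concat ?bs" using s(2) perm_act_eq by simp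
  have wp: "w \<noteq> []" "hd w = minlet w" "last w \<noteq> minlet w" using Wn_props[OF assms] by auto
  have wc: "concat (blocks w) = w" "\<forall>b\<in>set (blocks w). blk (minlet w) b"
    using blocks_char[OF wp] by auto
  have "set v = set (concat (blocks w))" using vc sbs by simp
  then have "set v = set w" using wc(1) by simp
  then have "minlet v = minlet w" unfolding minlet_def by simp
  moreover have vp: "v \<noteq> []" "hd v = minlet v" "last v \<noteq> minlet v" using Wn_props[OF s(3)] by auto
  ultimately have "blocks v = ?bs"
    using blocks_eq[OF vp vc[symmetric]] wc(2) sbs by simp
  then show "v \<in> {v \<in> Wn A n. mset (blocks v) = mset (blocks w)}" using ms s(3) by simp
next
  fix v assume "v \<in> {v \<in> Wn A n. mset (blocks v) = mset (blocks w)}"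
  then have v: "v \<in> Wn A n" "mset (blocks v) = mset (blocks w)" by auto
  obtain p where p: "p permutes {..<length (blocks w)}" "permute_list p (blocks w) = blocks v"
    using mset_eq_permutation[OF v(2)] by blast
  have vp: "v \<noteq> []" "hd v = minlet v" "last v \<noteq> minlet v" using Wn_props[OF v(1)] by auto
  have "concat (blocks v) = v" using blocks_char[OF vp] by auto
  moreover have "perm_act p w = concat (blocks v)" by (simp only: perm_act_eq p(2))
  ultimately have "perm_act p w = v" by simp
  then show "v \<in> Cw A n w" unfolding Cw_def nblocks_def using p(1) v(1) by blast
qed

theorem proposition2:
  fixes A :: "'a::linorder set" and n :: nat
  assumes "countable A"
  shows "partition_on (Wn A n) {Cw A n w | w. w \<in> Wn A n}"
proof -
  have P: "{Cw A n w | w. w \<in> Wn A n} =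
    {{v \<in> Wn A n. mset (blocks v) = mset (blocks w)} | w. w \<in> Wn A n}"
    using Cw_char by blast
  show ?thesis unfolding P partition_on_def disjoint_def by auto
qed

end
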